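(* Let $\alpha\in(0,1)$, $\beta=1/\alpha$, and $f=f_{M_1}$. Let $(x_n)_{n\ge0}$ be the sequence defined in the context. Then $$x_n=\frac{1}{(\alpha M_0(n)\,n)^{\beta}}+O\Big(\frac{\log n}{n^{1+\beta}}\Big),\qquad\text{where } M_0(n)=\frac1n\sum_{j=1}^nM_1(x_j).$$
   Context: $f_{M_1}(x)=x(1+M_1(x)x^\alpha)$ on $[0,1/2]$, $2x-1$ on $(1/2,1]$, with $M_1(x)=C_0\,2^{-\{c_1^{-1}\log x\}}$ ($\{\cdot\}$ fractional part, $\{x\}=\{-x\}$ for $x<0$), $c_1>0$, and $C_0$ chosen so that $f_{M_1}((1/2)^-)=1$. The discontinuity set in $(0,1/2)$ is $\mathcal C=\{s_\ell=e^{-\ell c_1}:\ell\ge1\}$; at $s_\ell$ the one-sided limits are $f(s_\ell^+)=s_\ell+C_0s_\ell^{1+\alpha}$ and $f(s_\ell^-)=s_\ell+\frac{C_0}2s_\ell^{1+\alpha}$. The sequence $(x_n)$: $x_0=1/2$; given $x_n$, if $x_n\in[f(s_\ell^-),f(s_\ell^+)]$ for some $\ell$ set $x_{n+1}=s_\ell$; otherwise set $x_{n+1}$ to be the unique point of $(0,x_n)$ with $f(x_{n+1})=x_n$. Then $x_n\downarrow0$, $f^k(x_n)\in(0,1/2)$ for $k<n$ and $f^n(x_n)=1/2$ (with one-sided values at discontinuities). Note $M_0(n)\in[C_0/2,C_0]$. *)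

theory Defs
  imports "HOL-Analysis.Analysis" "HOL-Library.Landau_Symbols"
begin

definition M1 :: "real \<Rightarrow> real \<Rightarrow> real \<Rightarrow> real" where
  "M1 c1 C0 x = C0 * 2 powr (- frac (ln x / c1))"

definition fM1 :: "real \<Rightarrow> real \<Rightarrow> real \<Rightarrow> real \<Rightarrow> real" where
  "fM1 \<alpha> c1 C0 x = (if x \<le> 1/2 then x * (1 + M1 c1 C0 x * x powr \<alpha>) else 2 * x - 1)"

text \<open>Discontinuity points s_l = exp(-l c_1), l >= 1.\<close>
definition sdisc :: "real \<Rightarrow> nat \<Rightarrow> real" where
  "sdisc c1 l = exp (- real l * c1)"

text \<open>One-sided limits of f at s_l (as given in the context).\<close>
definition fplus :: "real \<Rightarrow> real \<Rightarrow> real \<Rightarrow> nat \<Rightarrow> real" where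
  "fplus \<alpha> c1 C0 l = sdisc c1 l + C0 * sdisc c1 l powr (1 + \<alpha>)"

definition fminus :: "real \<Rightarrow> real \<Rightarrow> real \<Rightarrow> nat \<Rightarrow> real" where
  "fminus \<alpha> c1 C0 l = sdisc c1 l + C0 / 2 * sdisc c1 l powr (1 + \<alpha>)"

definition xstep :: "real \<Rightarrow> real \<Rightarrow> real \<Rightarrow> real \<Rightarrow> real" where
  "xstep \<alpha> c1 C0 x =
    (if \<exists>l\<ge>1. fminus \<alpha> c1 C0 l \<le> x \<and> x \<le> fplus \<alpha> c1 C0 l
     then sdisc c1 (SOME l. l \<ge> 1 \<and> fminus \<alpha> c1 C0 l \<le> x \<and> x \<le> fplus \<alpha> c1 C0 l)
     else (THE y. 0 < y \<and> y < x \<and> fM1 \<alpha> c1 C0 y = x))"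

primrec xseq :: "real \<Rightarrow> real \<Rightarrow> real \<Rightarrow> nat \<Rightarrow> real" where
  "xseq \<alpha> c1 C0 0 = 1/2"
| "xseq \<alpha> c1 C0 (Suc n) = xstep \<alpha> c1 C0 (xseq \<alpha> c1 C0 n)"

definition M0 :: "real \<Rightarrow> real \<Rightarrow> real \<Rightarrow> nat \<Rightarrow> real" where
  "M0 \<alpha> c1 C0 n = (\<Sum>j=1..n. M1 c1 C0 (xseq \<alpha> c1 C0 j)) / real n"

end

theory Submission
  imports Defs
begin


lemma M1_bounds:
  assumes "K > 0"
  shows "K/2 < M1 c1 K x" "M1 c1 K x \<le> K"
proof -
  have f: "0 \<le> frac (ln x / c1)" "frac (ln x / c1) < 1" by (auto simp: frac_lt_1)
  have "2 powr (- frac (ln x / c1)) \<le> 2 powr 0" using f by (intro powr_mono) auto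
  then show "M1 c1 K x \<le> K" using assms unfolding M1_def by simp
  have "2 powr (-1) < 2 powr (- frac (ln x / c1))" using f by (intro powr_less_mono) auto
  then show "K/2 < M1 c1 K x" using assms unfolding M1_def by (simp add: powr_minus_divide field_simps)
qed

locale P =
  fixes a c1 K :: real
  assumes a0: "0 < a" and a1: "a < 1" and c0: "0 < c1" and K0: "0 < K"
begin

abbreviation f where "f \<equiv> fM1 a c1 K"
definition g where "g x = x + K * x powr (1+a)"
definition h where "h x = x + K/2 * x powr (1+a)"
definition F :: "int \<Rightarrow> real \<Rightarrow> real" where
  "F k y = y + K * (2 powr (real_of_int k - ln y / c1)) * y powr (1+a)"
abbreviation s where "s \<equiv> sdisc c1"

lemma f_eq: "0 < x \<Longrightarrow> x \<le> 1/2 \<Longrightarrow> f x = x + M1 c1 K x * x powr (1+a)"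
  unfolding fM1_def by (simp add: powr_add algebra_simps)

lemma f_bounds: assumes "0 < x" "x \<le> 1/2" shows "h x < f x" "f x \<le> g x"
proof -
  have p: "x powr (1+a) > 0" using assms by simp
  show "h x < f x" using M1_bounds[OF K0, of c1 x] p assms unfolding f_eq[OF assms] h_def
    by (simp add: mult_strict_right_mono)
  show "f x \<le> g x" using M1_bounds[OF K0, of c1 x] p assms unfolding f_eq[OF assms] g_def
    by (simp add: mult_right_mono)
qed

lemma g_mono: assumes "0 < x" "x < y" shows "g x < g y"
proof -
  have "x powr (1+a) < y powr (1+a)" using assms a0 by (intro powr_less_mono2) auto
  then have "K * x powr (1+a) < K * y powr (1+a)" using K0 by simp
  then show ?thesis unfolding g_def using assms by simp
qed

lemma h_mono: assumes "0 < x" "x < y" shows "h x < h y"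
proof -
  have "x powr (1+a) < y powr (1+a)" using assms a0 by (intro powr_less_mono2) auto
  then have "K/2 * x powr (1+a) < K/2 * y powr (1+a)" using K0 by simp
  then show ?thesis unfolding h_def using assms by simp
qed

lemma h_gt: "0 < x \<Longrightarrow> x < h x" unfolding h_def using K0 by simp
lemma g_gt: "0 < x \<Longrightarrow> x < g x" unfolding g_def using K0 by simp
lemma F_gt: "0 < x \<Longrightarrow> x < F k x" unfolding F_def using K0 by simp

lemma fplus_eq: "fplus a c1 K l = g (s l)" unfolding fplus_def g_def by simp
lemma fminus_eq: "fminus a c1 K l = h (s l)" unfolding fminus_def h_def by simp

lemma s_pos: "0 < s l" unfolding sdisc_def by simp
lemma s_0: "s 0 = 1" unfolding sdisc_def by simp
lemma s_ln: "ln (s l) / c1 = - real l" unfolding sdisc_def using c0 by simp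
lemma s_le1: "s l \<le> 1" unfolding sdisc_def using c0 by simp
lemma s_less: "l < l' \<Longrightarrow> s l' < s l" unfolding sdisc_def using c0 by simp

lemma f_piece: assumes "0 < y" "y \<le> 1/2" shows "f y = F (floor (ln y / c1)) y"
proof -
  have "M1 c1 K y = K * 2 powr (real_of_int (floor (ln y / c1)) - ln y / c1)"
    unfolding M1_def frac_def by simp
  then show ?thesis using f_eq[OF assms] unfolding F_def by simp
qed

lemma F_left: "F k (exp (k * c1)) = g (exp (k * c1))"
  unfolding F_def g_def using c0 by simp
lemma F_right: "F k (exp ((k+1) * c1)) = h (exp ((k+1) * c1))"
  unfolding F_def h_def using c0 by (simp add: powr_minus_divide)

lemma F_cont: "continuous_on {0<..} (F k)"
  unfolding F_def apply (intro continuous_intros)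
  using c0 by auto

lemma F_alt: assumes "0 < y" shows
  "F k y = y + K * 2 powr (real_of_int k) * y powr (1 + a - ln 2 / c1)"
proof -
  have e: "2 powr (ln y / c1) = y powr (ln 2 / c1)" unfolding powr_def using assms by (simp add: mult.commute)
  have "2 powr (real_of_int k - ln y / c1) = 2 powr (real_of_int k) / y powr (ln 2 / c1)"
    by (simp add: powr_diff e)
  moreover have "y powr (1+a) / y powr (ln 2 / c1) = y powr (1 + a - ln 2 / c1)"
    by (simp add: powr_diff)
  moreover have gen: "\<And>A P Q::real. K * (A / P) * Q = K * A * (Q / P)" by simp
  ultimately show ?thesis unfolding F_def by metis
qed

end


context P begin

lemma s_int: "s l = exp (real_of_int (- int l) * c1)" unfolding sdisc_def by simp

lemma P_convex: assumes "q < 0" shows "convex_on {0<..} (\<lambda>y::real. y powr q)"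
proof (rule f''_ge0_imp_convex[where f' = "\<lambda>y. q * y powr (q - 1)" and f'' = "\<lambda>y. q * ((q-1) * y powr (q - 1 - 1))"])
  show "convex ({0<..}::real set)" by simp
  show "DERIV (\<lambda>y. y powr q) y :> q * y powr (q - 1)" if "y \<in> {0<..}" for y
    using that by (auto intro!: derivative_eq_intros)
  show "DERIV (\<lambda>y. q * y powr (q - 1)) y :> q * ((q-1) * y powr (q - 1 - 1))" if "y \<in> {0<..}" for y
    using that by (auto intro!: derivative_eq_intros)
  show "0 \<le> q * ((q-1) * y powr (q - 1 - 1))" if "y \<in> {0<..}" for y
  proof -
    have "0 \<le> q * (q - 1)" using assms by (intro mult_nonpos_nonpos) auto
    moreover have "0 \<le> y powr (q - 1 - 1)" by simp
    ultimately have "0 \<le> (q * (q - 1)) * y powr (q - 1 - 1)" by (rule mult_nonneg_nonneg)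
    thus ?thesis by (simp only: mult.assoc)
  qed
qed

lemma uniq:
  assumes ng: "\<not>(\<exists>l\<ge>1. fminus a c1 K l \<le> x \<and> x \<le> fplus a c1 K l)"
    and y1: "0 < y1" "y1 \<le> 1/2" "f y1 = x" and y2: "0 < y2" "y2 \<le> 1/2" "f y2 = x"
    and lt: "y1 < y2"
  shows False
proof -
  define k1 where "k1 = floor (ln y1 / c1)"
  define k2 where "k2 = floor (ln y2 / c1)"
  have "ln y1 < ln y2" using lt y1 by simp
  hence "ln y1 / c1 < ln y2 / c1" using c0 by (simp add: divide_strict_right_mono)
  hence k12: "k1 \<le> k2" unfolding k1_def k2_def by (simp add: floor_mono)
  have "ln y2 < 0" using y2 by simp
  hence "ln y2 / c1 < 0" using c0 by (simp add: divide_neg_pos)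
  hence k2neg: "k2 < 0" unfolding k2_def by (simp add: floor_less_iff)
  have k2le: "k2 * c1 \<le> ln y2"
  proof -
    have "real_of_int k2 \<le> ln y2 / c1" unfolding k2_def by simp
    thus ?thesis using c0 by (simp add: le_divide_eq)
  qed
  show False
  proof (cases "k1 < k2")
    case True
    define l where "l = nat (-k2)"
    have l1: "l \<ge> 1" using k2neg unfolding l_def by simp
    have sl: "s l = exp (k2 * c1)" unfolding s_int l_def using k2neg by simp
    have "s l \<le> y2" using k2le y2 unfolding sl by (metis exp_le_cancel_iff exp_ln)
    have "ln y1 / c1 < k1 + 1" unfolding k1_def by simp
    also have "\<dots> \<le> k2" using True by simp
    finally have "ln y1 < k2 * c1" using c0 by (simp add: divide_less_eq)
    hence "y1 < s l" unfolding sl using y1 by (metis exp_less_cancel_iff exp_ln)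
    have "fminus a c1 K l \<le> x"
    proof -
      have "h (s l) \<le> h y2" using \<open>s l \<le> y2\<close> h_mono[OF s_pos] by (cases "s l = y2") (auto simp: less_eq_real_def)
      also have "\<dots> < x" using f_bounds(1)[OF y2(1,2)] y2 by simp
      finally show ?thesis unfolding fminus_eq by simp
    qed
    moreover have "x \<le> fplus a c1 K l"
    proof -
      have "x \<le> g y1" using f_bounds(2)[OF y1(1,2)] y1 by simp
      also have "\<dots> < g (s l)" using g_mono[OF y1(1) \<open>y1 < s l\<close>] .
      finally show ?thesis unfolding fplus_eq by simp
    qed
    ultimately show False using ng l1 by blast
  next
    case False
    hence kk: "k1 = k2" using k12 by simp
    define k where "k = k2"
    define l where "l = nat (-k)"
    define q where "q = 1 + a - ln 2 / c1"
    define C where "C = K * 2 powr (real_of_int k)"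
    have C0: "C > 0" unfolding C_def using K0 by simp
    have l1: "l \<ge> 1" using k2neg unfolding l_def k_def by simp
    have sl: "s l = exp (k * c1)" unfolding s_int l_def k_def using k2neg by simp
    have k1le: "k * c1 \<le> ln y1"
    proof -
      have "real_of_int k1 \<le> ln y1 / c1" unfolding k1_def by simp
      thus ?thesis using c0 kk unfolding k_def by (simp add: le_divide_eq)
    qed
    have sly1: "s l \<le> y1" using k1le y1 unfolding sl by (metis exp_le_cancel_iff exp_ln)
    have Fy1: "x = y1 + C * y1 powr q"
      using f_piece[OF y1(1,2)] F_alt[OF y1(1)] y1 kk unfolding k1_def k_def C_def q_def k2_def by simp
    have Fy2: "x = y2 + C * y2 powr q"
      using f_piece[OF y2(1,2)] F_alt[OF y2(1)] y2 unfolding k_def C_def q_def k2_def by simp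
    have Fs: "fplus a c1 K l = s l + C * (s l) powr q"
      unfolding fplus_eq sl using F_left[of k] F_alt[of "exp (k * c1)" k] unfolding C_def q_def by simp
    have diff: "y1 powr q - y2 powr q = (y2 - y1) / C" using Fy1 Fy2 C0 by (simp add: field_simps)
    have "(y2 - y1) / C > 0" using lt C0 by simp
    hence gt: "y1 powr q > y2 powr q" using diff by linarith
    have qneg: "q < 0"
    proof (rule ccontr)
      assume "\<not> q < 0"
      hence "y1 powr q \<le> y2 powr q" using y1 lt by (intro powr_mono2) auto
      thus False using gt by simp
    qed
    have "x \<le> fplus a c1 K l"
    proof (cases "s l = y1")
      case True thus ?thesis using Fy1 Fs by simp
    next
      case False
      hence sl_lt: "s l < y1" using sly1 by simp
      have cv: "convex_on {0<..} (\<lambda>y::real. y powr q)" by (rule P_convex[OF qneg])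
      have A: "((s l) powr q - y1 powr q) / (s l - y1) \<le> ((s l) powr q - y2 powr q) / (s l - y2)"
        using convex_on_slope_le(1)[OF cv, of "s l" y2 y1] sl_lt lt s_pos y2 by simp
      have B: "((s l) powr q - y2 powr q) / (s l - y2) \<le> (y1 powr q - y2 powr q) / (y1 - y2)"
        using convex_on_slope_le(2)[OF cv, of "s l" y2 y1] sl_lt lt s_pos y2 by simp
      have "(y1 powr q - y2 powr q) / (y1 - y2) = - 1 / C" using diff lt C0 by (simp add: field_simps)
      hence "((s l) powr q - y1 powr q) / (s l - y1) \<le> - 1 / C" using A B by simp
      hence "- 1 / C * (s l - y1) \<le> (s l) powr q - y1 powr q"
        using sl_lt by (simp add: divide_le_eq)
      moreover have "- 1 / C * (s l - y1) = (y1 - s l) / C" using C0 by (simp add: field_simps)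
      ultimately have "(y1 - s l) / C \<le> (s l) powr q - y1 powr q" by simp
      hence "y1 - s l \<le> ((s l) powr q - y1 powr q) * C" using C0 by (simp only: pos_divide_le_eq)
      hence "y1 - s l \<le> C * (s l) powr q - C * y1 powr q" by (simp add: algebra_simps)
      thus ?thesis using Fy1 Fs by simp
    qed
    moreover have "fminus a c1 K l \<le> x"
    proof -
      have "h (s l) \<le> h y1" using sly1 h_mono[OF s_pos] by (cases "s l = y1") (auto simp: less_eq_real_def)
      also have "\<dots> < x" using f_bounds(1)[OF y1(1,2)] y1 by simp
      finally show ?thesis unfolding fminus_eq by simp
    qed
    ultimately show False using ng l1 by blast
  qed
qed

end


context P begin

lemma s_small: assumes "0 < e" shows "\<exists>l\<ge>1. s l < e"
proof -
  obtain n :: nat where n: "- ln e / c1 < real n" using reals_Archimedean2 by blast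
  have "- ln e < real n * c1" using n pos_divide_less_eq[OF c0] by blast
  hence "- real (Suc n) * c1 < ln e" using c0 by (simp add: algebra_simps)
  hence "s (Suc n) < e" unfolding sdisc_def using assms by (metis exp_less_cancel_iff exp_ln)
  thus ?thesis by (intro exI[of _ "Suc n"]) auto
qed

lemma g_le: "g (s l) \<le> (1 + K) * s l"
proof -
  have "s l powr (1+a) = s l * s l powr a" using s_pos[of l] by (simp add: powr_add)
  also have "\<dots> \<le> s l * 1"
  proof -
    have "s l powr a \<le> 1 powr a" using s_pos[of l] s_le1[of l] a0 by (intro powr_mono2) auto
    thus ?thesis using s_pos[of l] by (intro mult_left_mono) auto
  qed
  finally show ?thesis unfolding g_def using K0 by (simp add: algebra_simps mult_left_mono)
qed

lemma exist:
  assumes x: "0 < x" "x \<le> 1/2"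
    and ng: "\<not>(\<exists>l\<ge>1. fminus a c1 K l \<le> x \<and> x \<le> fplus a c1 K l)"
  shows "\<exists>y. 0 < y \<and> y < x \<and> f y = x"
proof -
  obtain l0 where l0: "l0 \<ge> 1" "s l0 < x / (1 + K)" using s_small[of "x / (1+K)"] x K0 by auto
  have "g (s l0) < x" using g_le[of l0] l0 K0 by (simp add: pos_less_divide_eq mult.commute)
  hence ex: "\<exists>l. 1 \<le> l \<and> g (s l) < x" using l0 by blast
  define L where "L = (LEAST l. 1 \<le> l \<and> g (s l) < x)"
  have L: "1 \<le> L" "g (s L) < x" using LeastI_ex[OF ex] unfolding L_def by auto
  have hL: "x < h (s (L - 1))" if "L \<ge> 2"
  proof -
    have "\<not> (1 \<le> L - 1 \<and> g (s (L-1)) < x)" unfolding L_def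
      by (rule not_less_Least) (use that L_def in auto)
    hence "x \<le> g (s (L - 1))" using that by auto
    moreover have "1 \<le> L - 1" using that by simp
    hence "\<not> (fminus a c1 K (L-1) \<le> x \<and> x \<le> fplus a c1 K (L-1))" using ng by blast
    ultimately show ?thesis unfolding fplus_eq fminus_eq by auto
  qed
  define k :: int where "k = - int L"
  have sL: "s L = exp (real_of_int k * c1)" unfolding k_def s_int ..
  have sL1: "s (L - 1) = exp ((real_of_int k + 1) * c1)"
    unfolding k_def sdisc_def using L(1) by (simp add: of_nat_diff algebra_simps)
  define b where "b = min (s (L - 1)) (1/2)"
  have sLx: "s L < x" using g_gt[OF s_pos[of L]] L by simp
  have sLb: "s L < b" unfolding b_def using s_less[of "L-1" L] L(1) sLx x by auto
  have Fa: "F k (s L) \<le> x" unfolding sL F_left using L sL by simp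
  have Fb: "x \<le> F k b"
  proof (cases "b = 1/2")
    case True thus ?thesis using F_gt[of b k] x by simp
  next
    case False
    hence b: "b = s (L-1)" "s (L-1) < 1/2" unfolding b_def by auto
    have "L \<noteq> 1" using b s_0 by auto
    hence "L \<ge> 2" using L by simp
    hence "x < h (s (L-1))" by (rule hL)
    also have "h (s (L-1)) = F k b" unfolding b sL1 F_right by simp
    finally show ?thesis by simp
  qed
  have sub: "{s L..b} \<subseteq> {0<..}" using s_pos[of L] by auto
  have cont: "continuous_on {s L..b} (F k)"
    by (rule continuous_on_subset[OF F_cont sub])
  obtain y0 where y0: "s L \<le> y0" "y0 \<le> b" "F k y0 = x"
    using IVT'[of "F k" "s L" x b, OF Fa Fb _ cont] sLb by auto
  have y0p: "0 < y0" using y0 s_pos[of L] by simp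
  have y0x: "y0 < x" using F_gt[OF y0p, of k] y0 by simp
  have y0h: "y0 \<le> 1/2" using y0 unfolding b_def by simp
  have y0s: "y0 < s (L - 1)"
  proof (cases "L = 1")
    case True thus ?thesis using y0h s_0 by simp
  next
    case False
    hence L2: "L \<ge> 2" using L by simp
    have "y0 \<noteq> s (L - 1)"
    proof
      assume e: "y0 = s (L - 1)"
      have "x < h (s (L-1))" by (rule hL[OF L2])
      also have "h (s (L-1)) = F k y0" unfolding e sL1 F_right by simp
      finally show False using y0 by simp
    qed
    thus ?thesis using y0 unfolding b_def by auto
  qed
  have fl: "floor (ln y0 / c1) = k"
  proof (rule floor_unique)
    have "real_of_int k * c1 \<le> ln y0" using y0(1) y0p unfolding sL by (metis exp_le_cancel_iff exp_ln)
    thus "real_of_int k \<le> ln y0 / c1" using c0 by (simp add: le_divide_eq)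
    have "ln y0 < (real_of_int k + 1) * c1" using y0s y0p unfolding sL1 by (metis exp_less_cancel_iff exp_ln)
    thus "ln y0 / c1 < real_of_int k + 1" using c0 by (simp add: divide_less_eq)
  qed
  have "f y0 = x" using f_piece[OF y0p y0h] fl y0 by simp
  thus ?thesis using y0p y0x by blast
qed

lemma xstep_prop:
  assumes x: "0 < x" "x \<le> 1/2"
  shows "0 < xstep a c1 K x \<and> xstep a c1 K x < x \<and>
    (\<exists>m. K/2 \<le> m \<and> m \<le> K \<and> x = xstep a c1 K x + m * (xstep a c1 K x) powr (1+a) \<and>
       (m \<noteq> M1 c1 K (xstep a c1 K x) \<longrightarrow> (\<exists>l\<ge>1. xstep a c1 K x = s l)))"
proof (cases "\<exists>l\<ge>1. fminus a c1 K l \<le> x \<and> x \<le> fplus a c1 K l")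
  case True
  define l where "l = (SOME l. l \<ge> 1 \<and> fminus a c1 K l \<le> x \<and> x \<le> fplus a c1 K l)"
  have l: "l \<ge> 1" "fminus a c1 K l \<le> x" "x \<le> fplus a c1 K l"
    using someI_ex[OF True] unfolding l_def by auto
  have xs: "xstep a c1 K x = s l" unfolding xstep_def l_def using True by simp
  define y where "y = s l"
  have yp: "0 < y" unfolding y_def by (rule s_pos)
  have hy: "h y \<le> x" "x \<le> g y" using l unfolding y_def fminus_eq fplus_eq by auto
  have P: "y powr (1+a) > 0" using yp by simp
  define m where "m = (x - y) / y powr (1+a)"
  have m: "m * y powr (1+a) = x - y" unfolding m_def using P by simp
  have "K/2 \<le> m" unfolding m_def using hy P by (simp add: pos_le_divide_eq h_def)
  moreover have "m \<le> K" unfolding m_def using hy P by (simp add: pos_divide_le_eq g_def)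
  moreover have "y < x" using h_gt[OF yp] hy by simp
  ultimately have "0 < y \<and> y < x \<and> (K/2 \<le> m \<and> m \<le> K \<and> x = y + m * y powr (1+a) \<and>
       (m \<noteq> M1 c1 K y \<longrightarrow> (\<exists>l\<ge>1. y = s l)))" using yp m l(1) unfolding y_def by auto
  thus ?thesis unfolding xs y_def by blast
next
  case False
  have ex1: "\<exists>!y. 0 < y \<and> y < x \<and> f y = x"
  proof (rule ex_ex1I)
    show "\<exists>y. 0 < y \<and> y < x \<and> f y = x" by (rule exist[OF x False])
    fix y1 y2 assume A: "0 < y1 \<and> y1 < x \<and> f y1 = x" "0 < y2 \<and> y2 < x \<and> f y2 = x"
    show "y1 = y2"
    proof (rule ccontr)
      assume "y1 \<noteq> y2"
      hence "y1 < y2 \<or> y2 < y1" by auto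
      thus False using uniq[OF False, of y1 y2] uniq[OF False, of y2 y1] A x by auto
    qed
  qed
  have xs: "xstep a c1 K x = (THE y. 0 < y \<and> y < x \<and> f y = x)" by (simp only: xstep_def if_not_P[OF False])
  define y where "y = xstep a c1 K x"
  have y: "0 < y" "y < x" "f y = x" using theI'[OF ex1] unfolding y_def xs by auto
  have "x = y + M1 c1 K y * y powr (1+a)" using f_eq[of y] y x by simp
  hence "0 < y \<and> y < x \<and> (K/2 \<le> M1 c1 K y \<and> M1 c1 K y \<le> K \<and> x = y + M1 c1 K y * y powr (1+a) \<and>
       (M1 c1 K y \<noteq> M1 c1 K y \<longrightarrow> (\<exists>l\<ge>1. y = s l)))" using y M1_bounds[OF K0, of c1 y] by auto
  thus ?thesis unfolding y_def by blast
qed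

end



lemma incr_bounds:
  fixes a m x' :: real
  assumes a: "0 < a" and m: "0 < m" and xp: "0 < x'"
  defines "u \<equiv> x' powr a"
  shows "a * m / (1 + (1 + a) * m * u) \<le> x' powr (-a) - (x' + m * x' powr (1+a)) powr (-a)"
    and "x' powr (-a) - (x' + m * x' powr (1+a)) powr (-a) \<le> a * m"
proof -
  define t where "t = m * u"
  have u: "u > 0" unfolding u_def using xp by simp
  have t: "t > 0" unfolding t_def using u m by simp
  have xeq: "x' + m * x' powr (1+a) = x' * (1 + t)"
    unfolding t_def u_def using xp by (simp add: powr_add algebra_simps)
  have "(x' * (1 + t)) powr (-a) = x' powr (-a) * (1+t) powr (-a)"
    using xp t by (simp add: powr_mult)
  moreover have xu: "x' powr (-a) = 1 / u" unfolding u_def by (simp add: powr_minus_divide)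
  ultimately have D0: "(x' * (1 + t)) powr (-a) = (1+t) powr (-a) / u" by simp
  have D: "x' powr (-a) - (x' + m * x' powr (1+a)) powr (-a) = (1 - (1+t) powr (-a)) / u"
    unfolding xeq D0 xu by (simp add: diff_divide_distrib)
  define z where "z = a * ln (1+t)"
  have e: "(1+t) powr (-a) = exp (- z)" unfolding z_def powr_def using t by simp
  have lnle: "ln (1+t) \<le> t" using t by (intro ln_add_one_self_le_self) simp
  have lnge: "t / (1+t) \<le> ln (1+t)"
  proof -
    have "ln (1 / (1+t)) \<le> 1 / (1+t) - 1" using t by (intro ln_le_minus_one) simp
    hence "- ln (1+t) \<le> 1/(1+t) - 1" using t by (simp add: ln_div)
    moreover have "1/(1+t) - 1 = - (t / (1+t))" using t by (simp add: field_simps)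
    ultimately show ?thesis by simp
  qed
  have z0: "z \<ge> 0" unfolding z_def using t a by simp
  have "1 - z \<le> exp (- z)" using exp_ge_add_one_self[of "-z"] by simp
  moreover have "z \<le> a * t" unfolding z_def using lnle a by simp
  ultimately have up: "1 - (1+t) powr (-a) \<le> a * t" unfolding e by simp
  show "x' powr (-a) - (x' + m * x' powr (1+a)) powr (-a) \<le> a * m"
    unfolding D using up u by (simp add: divide_le_eq t_def mult.commute mult.left_commute)
  have "1 + z \<le> exp z" by (rule exp_ge_add_one_self)
  hence "exp (-z) \<le> 1 / (1 + z)" using z0 by (simp add: exp_minus field_simps)
  hence l1: "z / (1 + z) \<le> 1 - (1+t) powr (-a)" unfolding e using z0 by (simp add: field_simps)
  define w where "w = a * t / (1 + t)"
  have w0: "0 \<le> w" unfolding w_def using a t by simp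
  have wz: "w \<le> z" unfolding w_def z_def using lnge a t
    by (metis mult_left_mono less_imp_le times_divide_eq_right)
  have "w / (1 + w) \<le> z / (1 + z)" using wz w0 z0 by (simp add: field_simps)
  moreover have "w / (1 + w) = a * t / (1 + (1+a) * t)"
  proof -
    have d0: "0 < (1+a)*t" using t a by simp
    have d: "1 + t \<noteq> 0" "1 + (1+a) * t \<noteq> 0" using t d0 by linarith+
    have eq1: "1 + w = (1 + (1+a)*t)/(1+t)" unfolding w_def using d by (simp add: field_simps)
    have "w / (1+w) = (a*t/(1+t)) / ((1 + (1+a)*t)/(1+t))" unfolding eq1 unfolding w_def ..
    also have "\<dots> = a*t/(1+(1+a)*t)" using d by simp
    finally show ?thesis .
  qed
  ultimately have l2: "a * t / (1 + (1+a) * t) \<le> 1 - (1+t) powr (-a)" using l1 by simp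
  have "a * m / (1 + (1 + a) * m * u) = (a * t / (1 + (1+a) * t)) / u"
  proof -
    define X where "X = 1 + (1+a)*t"
    have X: "1 + (1 + a) * m * u = X" unfolding X_def t_def by (simp add: ac_simps)
    have "(a * t / X) / u = (u * (a*m)) / (u * X)" unfolding t_def by (simp add: ac_simps)
    also have "\<dots> = a * m / X" using u by simp
    finally show ?thesis unfolding X X_def by simp
  qed
  also have "\<dots> \<le> (1 - (1+t) powr (-a)) / u" using divide_right_mono[OF l2, of u] u by simp
  finally show "a * m / (1 + (1 + a) * m * u) \<le> x' powr (-a) - (x' + m * x' powr (1+a)) powr (-a)"
    unfolding D .
qed

lemma powr_diff_bound:
  fixes b c y Y :: real
  assumes b: "0 < b" and c: "0 < c" "c \<le> y" "c \<le> Y"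
  shows "\<bar>y powr (-b) - Y powr (-b)\<bar> \<le> b * c powr (-b-1) * \<bar>y - Y\<bar>"
proof -
  have main: "\<bar>p powr (-b) - q powr (-b)\<bar> \<le> b * c powr (-b-1) * \<bar>p - q\<bar>"
    if pq: "c \<le> p" "p < q" for p q
  proof -
    have "\<exists>z. p < z \<and> z < q \<and> q powr (-b) - p powr (-b) = (q - p) * (- b * z powr (-b - 1))"
      using pq c by (intro MVT2) (auto intro!: derivative_eq_intros)
    then obtain z where z: "p < z" "z < q" "q powr (-b) - p powr (-b) = (q - p) * (- b * z powr (-b - 1))"
      by blast
    have zc: "z powr (-b-1) \<le> c powr (-b-1)" using z pq c b by (intro powr_mono2') auto
    have eq: "p powr (-b) - q powr (-b) = (q - p) * (b * z powr (-b-1))" using z(3) by (simp add: algebra_simps)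
    have "0 \<le> (q - p) * (b * z powr (-b-1))" using pq b by simp
    hence "\<bar>p powr (-b) - q powr (-b)\<bar> = (q - p) * (b * z powr (-b-1))" unfolding eq by simp
    also have "\<dots> \<le> (q - p) * (b * c powr (-b-1))" using zc pq b by (intro mult_left_mono) auto
    finally show ?thesis using pq by (simp add: algebra_simps)
  qed
  consider "y < Y" | "y = Y" | "Y < y" by linarith
  thus ?thesis
  proof cases
    case 1 thus ?thesis using main c by blast
  next
    case 2 thus ?thesis by simp
  next
    case 3 thus ?thesis using main[of Y y] c by (simp add: abs_minus_commute)
  qed
qed

lemma harm_bound: assumes n1: "n \<ge> 1" shows "(\<Sum>j<n. 1 / real (Suc j)) \<le> 1 + ln (real n)"
proof -
  obtain k where k: "n = Suc k" using n1 by (cases n) auto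
  have dec: "\<And>m n. m \<le> n \<Longrightarrow> harm (Suc n) - ln (real (Suc n)) \<le> (harm (Suc m) - ln (real (Suc m)) :: real)"
    using decseq_harm_diff_ln unfolding decseq_def by blast
  have "harm (Suc k) - ln (real (Suc k)) \<le> (harm (Suc 0) - ln (real (Suc 0)) :: real)"
    by (rule dec) simp
  moreover have "harm (Suc 0) = (1::real)" by (simp add: harm_altdef)
  ultimately have "harm n \<le> 1 + ln (real n)" unfolding k by simp
  thus ?thesis by (simp add: harm_altdef divide_inverse)
qed



context P begin

abbreviation xs where "xs \<equiv> xseq a c1 K"
definition y where "y n = xs n powr (-a)"

lemma xs_bounds: "0 < xs n \<and> xs n \<le> 1/2"
proof (induction n)
  case 0 thus ?case by simp
next
  case (Suc n) thus ?case using xstep_prop[of "xs n"] by auto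
qed

lemma xs_pos: "0 < xs n" and xs_half: "xs n \<le> 1/2" using xs_bounds by auto

lemma xs_dec: "xs (Suc n) < xs n" using xstep_prop[of "xs n"] xs_bounds[of n] by auto

lemma xs_anti: "m < n \<Longrightarrow> xs n < xs m"
proof (induction n)
  case 0 thus ?case by simp
next
  case (Suc n) thus ?case using xs_dec[of n] by (cases "m = n") auto
qed

lemma xs_anti_le: "m \<le> n \<Longrightarrow> xs n \<le> xs m"
  using xs_anti[of m n] by (cases "m = n") auto

lemma ex_mm: "\<exists>mm. \<forall>n. K/2 \<le> mm n \<and> mm n \<le> K \<and> xs n = xs (Suc n) + mm n * xs (Suc n) powr (1+a) \<and>
   (mm n \<noteq> M1 c1 K (xs (Suc n)) \<longrightarrow> (\<exists>l\<ge>1. xs (Suc n) = s l))"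
proof (rule choice, rule allI)
  fix n
  show "\<exists>m. K/2 \<le> m \<and> m \<le> K \<and> xs n = xs (Suc n) + m * xs (Suc n) powr (1+a) \<and>
   (m \<noteq> M1 c1 K (xs (Suc n)) \<longrightarrow> (\<exists>l\<ge>1. xs (Suc n) = s l))"
    using xstep_prop[of "xs n"] xs_bounds[of n] by simp
qed

definition \<delta> where "\<delta> = a * (K/2) / (1 + (1+a) * K)"
definition C1 where "C1 = a * (1+a) * K^2"

lemma delta_pos: "\<delta> > 0" unfolding \<delta>_def using a0 K0 by (simp add: add_pos_pos)

lemma y_pos: "y n > 0" unfolding y_def using xs_pos[of n] by simp

lemma u_eq: "xs n powr a = 1 / y n" unfolding y_def using xs_pos[of n] by (simp add: powr_minus_divide)

lemma u_le: "xs n powr a \<le> 1" using xs_pos[of n] xs_half[of n] a0 by (intro powr_le1) auto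

lemma y0: "y 0 = 2 powr a" unfolding y_def by (simp add: powr_minus_divide powr_divide)

lemma y0_bounds: "1 \<le> y 0" "y 0 \<le> 2"
proof -
  have "2 powr 0 \<le> (2::real) powr a" using a0 by (intro powr_mono) auto
  thus "1 \<le> y 0" unfolding y0 by simp
  have "(2::real) powr a \<le> 2 powr 1" using a1 by (intro powr_mono) auto
  thus "y 0 \<le> 2" unfolding y0 by simp
qed

context
  fixes mm :: "nat \<Rightarrow> real"
  assumes mm: "\<And>n. K/2 \<le> mm n \<and> mm n \<le> K \<and> xs n = xs (Suc n) + mm n * xs (Suc n) powr (1+a) \<and>
   (mm n \<noteq> M1 c1 K (xs (Suc n)) \<longrightarrow> (\<exists>l\<ge>1. xs (Suc n) = s l))"
begin

lemma D_bounds: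
  shows "\<delta> \<le> y (Suc n) - y n" "y (Suc n) - y n \<le> a * K"
    "\<bar>y (Suc n) - y n - a * mm n\<bar> \<le> C1 / y (Suc n)"
proof -
  define x' where "x' = xs (Suc n)"
  define m where "m = mm n"
  define u where "u = x' powr a"
  have m: "K/2 \<le> m" "m \<le> K" using mm[of n] unfolding m_def by auto
  have mp: "0 < m" using m K0 by simp
  have xp: "0 < x'" unfolding x'_def by (rule xs_pos)
  have yn: "y n = (x' + m * x' powr (1+a)) powr (-a)" unfolding y_def x'_def m_def using mm[of n] by simp
  have ys: "y (Suc n) = x' powr (-a)" unfolding y_def x'_def ..
  have D: "y (Suc n) - y n = x' powr (-a) - (x' + m * x' powr (1+a)) powr (-a)" using yn ys by simp
  note ib = incr_bounds[OF a0 mp xp]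
  have u0: "0 \<le> u" unfolding u_def by simp
  have u1: "u \<le> 1" unfolding u_def x'_def by (rule u_le)
  have uy: "u = 1 / y (Suc n)" unfolding u_def x'_def by (rule u_eq)
  have L: "a * m / (1 + (1 + a) * m * u) \<le> y (Suc n) - y n" using ib(1) unfolding D u_def .
  have U: "y (Suc n) - y n \<le> a * m" using ib(2) unfolding D .
  show "y (Suc n) - y n \<le> a * K" using U m a0 by (smt (verit) mult_left_mono)
  have mu: "m * u \<le> K" using mult_mono[OF m(2) u1] K0 u0 by simp
  have "\<delta> \<le> a * m / (1 + (1 + a) * m * u)" unfolding \<delta>_def
  proof (rule frac_le)
    show "0 \<le> a * m" using a0 mp by simp
    show "a * (K / 2) \<le> a * m" using m a0 by simp
    show "0 < 1 + (1 + a) * m * u" using a0 mp u0 by (simp add: add_pos_nonneg)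
    show "1 + (1 + a) * m * u \<le> 1 + (1 + a) * K" using mu a0
      by (metis add_le_cancel_left mult.assoc mult_left_mono less_imp_le add_pos_pos zero_less_one)
  qed
  thus "\<delta> \<le> y (Suc n) - y n" using L by simp
  define W where "W = (1 + a) * m * u"
  have W0: "0 \<le> W" unfolding W_def using a0 mp u0 by simp
  have "(a * m - a * m * W) * (1 + W) \<le> a * m"
  proof -
    have "(a * m - a * m * W) * (1 + W) = a * m - a * m * W^2" by (simp add: algebra_simps power2_eq_square)
    moreover have "0 \<le> a * m * W^2" using a0 mp W0 by simp
    ultimately show ?thesis by simp
  qed
  hence "a * m - a * m * W \<le> a * m / (1 + W)" using W0 by (simp add: pos_le_divide_eq)
  hence low: "a * m - a * m * W \<le> y (Suc n) - y n" using L unfolding W_def by simp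
  have "a * m * W = a * (1 + a) * m^2 * u" unfolding W_def by (simp add: power2_eq_square)
  also have "\<dots> \<le> a * (1 + a) * K^2 * u"
  proof -
    have "m^2 \<le> K^2" using m mp by (intro power_mono) auto
    thus ?thesis using a0 u0 by (intro mult_right_mono mult_left_mono) auto
  qed
  finally have "a * m * W \<le> C1 / y (Suc n)" unfolding C1_def uy by simp
  thus "\<bar>y (Suc n) - y n - a * mm n\<bar> \<le> C1 / y (Suc n)" using low U unfolding m_def by simp
qed

lemma y_lower: "1 + \<delta> * n \<le> y n"
proof (induction n)
  case 0 thus ?case using y0_bounds by simp
next
  case (Suc n) thus ?case using D_bounds(1)[of n] by (simp add: algebra_simps)
qed

lemma y_upper: "y n \<le> 2 + a * K * n"
proof (induction n)
  case 0 thus ?case using y0_bounds by simp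
next
  case (Suc n) thus ?case using D_bounds(2)[of n] by (simp add: algebra_simps)
qed

end
end


context P begin

context
  fixes mm :: "nat \<Rightarrow> real"
  assumes mm: "\<And>n. K/2 \<le> mm n \<and> mm n \<le> K \<and> xs n = xs (Suc n) + mm n * xs (Suc n) powr (1+a) \<and>
   (mm n \<noteq> M1 c1 K (xs (Suc n)) \<longrightarrow> (\<exists>l\<ge>1. xs (Suc n) = s l))"
begin

lemma card_jumps:
  fixes n :: nat
  assumes n1: "n \<ge> 1"
  shows "real (card {j\<in>{..<n}. mm j \<noteq> M1 c1 K (xs (Suc j))}) \<le> (ln (2 + a * K) + ln n) / (a * c1)"
proof -
  define J where "J = {j\<in>{..<n}. mm j \<noteq> M1 c1 K (xs (Suc j))}"
  define lj where "lj j = (SOME l. l \<ge> 1 \<and> xs (Suc j) = s l)" for j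
  have lj: "lj j \<ge> 1 \<and> xs (Suc j) = s (lj j)" if "j \<in> J" for j
  proof -
    have "\<exists>l. l \<ge> 1 \<and> xs (Suc j) = s l" using mm[of j] that unfolding J_def by auto
    thus ?thesis unfolding lj_def by (rule someI_ex)
  qed
  have inj: "inj_on lj J"
  proof (rule inj_onI)
    fix i j assume ij: "i \<in> J" "j \<in> J" "lj i = lj j"
    hence e: "xs (Suc i) = xs (Suc j)" using lj[OF ij(1)] lj[OF ij(2)] by simp
    show "i = j"
    proof (rule ccontr)
      assume "i \<noteq> j"
      hence "i < j \<or> j < i" by auto
      thus False using xs_anti[of "Suc i" "Suc j"] xs_anti[of "Suc j" "Suc i"] e by auto
    qed
  qed
  define r where "r = - ln (xs n) / c1"
  define N where "N = nat (floor r)"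
  have img: "lj ` J \<subseteq> {1..N}"
  proof
    fix l assume "l \<in> lj ` J"
    then obtain j where j: "j \<in> J" "l = lj j" by blast
    have jn: "j < n" using j unfolding J_def by simp
    have "xs n \<le> xs (Suc j)" using jn by (intro xs_anti_le) simp
    hence "xs n \<le> exp (- real l * c1)" using lj[OF j(1)] j(2) unfolding sdisc_def by simp
    hence "ln (xs n) \<le> - real l * c1" using xs_pos[of n] by (metis exp_le_cancel_iff exp_ln)
    hence "real l * c1 \<le> - ln (xs n)" by simp
    hence "real l \<le> r" unfolding r_def using pos_le_divide_eq[OF c0] by blast
    hence "l \<le> N" unfolding N_def by (simp add: le_nat_floor)
    thus "l \<in> {1..N}" using lj[OF j(1)] j(2) by simp
  qed
  have "card J \<le> card {1..N}" by (rule card_inj_on_le[OF inj img]) simp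
  hence cJ: "real (card J) \<le> real N" by simp
  have r0: "0 \<le> r"
  proof -
    have "ln (xs n) \<le> 0" using xs_pos[of n] xs_half[of n] by simp
    hence "0 \<le> - ln (xs n)" by simp
    thus ?thesis unfolding r_def by (rule divide_nonneg_pos[OF _ c0])
  qed
  have "real N \<le> r" unfolding N_def using r0 by simp
  also have "r = ln (y n) / (a * c1)"
  proof -
    have "ln (y n) = - a * ln (xs n)" unfolding y_def by simp
    thus ?thesis unfolding r_def using a0 c0 by (simp add: field_simps)
  qed
  also have "\<dots> \<le> (ln (2 + a * K) + ln n) / (a * c1)"
  proof -
    have "ln (y n) \<le> ln (2 + a * K * n)" using y_upper[OF mm, of n] y_pos[of n] by simp
    also have "\<dots> \<le> ln ((2 + a * K) * n)"
    proof -
      have "2 + a * K * n \<le> (2 + a * K) * n" using n1 by (simp add: algebra_simps)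
      moreover have "0 < 2 + a * K * n" using a0 K0 by (simp add: add_pos_nonneg)
      ultimately show ?thesis by simp
    qed
    also have "\<dots> = ln (2 + a * K) + ln n"
    proof -
      have "0 < a * K" using a0 K0 by simp
      hence "0 < 2 + a * K" by linarith
      moreover have "0 < real n" using n1 by simp
      ultimately show ?thesis by (rule ln_mult_pos)
    qed
    finally show ?thesis using a0 c0 by (simp add: divide_right_mono)
  qed
  finally show ?thesis using cJ unfolding J_def by simp
qed

definition B0 where "B0 = 2 + 2 * (C1 / \<delta>) + (K/2) * (ln (2 + a * K) + 1) / c1"

lemma E_bound:
  assumes n3: "n \<ge> 3"
  shows "\<bar>y n - a * (\<Sum>j<n. M1 c1 K (xs (Suc j)))\<bar> \<le> B0 * ln n"
proof -
  define d where "d j = y (Suc j) - y j - a * mm j" for j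
  define e where "e j = mm j - M1 c1 K (xs (Suc j))" for j
  have tel: "y n = y 0 + (\<Sum>j<n. y (Suc j) - y j)" using sum_lessThan_telescope[of y n] by simp
  have "(\<Sum>j<n. d j) + a * (\<Sum>j<n. e j) = (\<Sum>j<n. d j + a * e j)" by (simp add: sum.distrib sum_distrib_left)
  also have "\<dots> = (\<Sum>j<n. (y (Suc j) - y j) - a * M1 c1 K (xs (Suc j)))"
    by (rule sum.cong) (auto simp: d_def e_def algebra_simps)
  also have "\<dots> = (\<Sum>j<n. y (Suc j) - y j) - a * (\<Sum>j<n. M1 c1 K (xs (Suc j)))"
    by (simp add: sum_subtractf sum_distrib_left)
  finally have split: "(\<Sum>j<n. d j) + a * (\<Sum>j<n. e j) = (\<Sum>j<n. y (Suc j) - y j) - a * (\<Sum>j<n. M1 c1 K (xs (Suc j)))" .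
  have Eeq: "y n - a * (\<Sum>j<n. M1 c1 K (xs (Suc j))) = y 0 + (\<Sum>j<n. d j) + a * (\<Sum>j<n. e j)"
  proof -
    have "y n - a * (\<Sum>j<n. M1 c1 K (xs (Suc j))) = y 0 + ((\<Sum>j<n. y (Suc j) - y j) - a * (\<Sum>j<n. M1 c1 K (xs (Suc j))))"
      by (subst tel) (rule add_diff_eq[symmetric])
    thus ?thesis unfolding split[symmetric] by (simp only: add.assoc)
  qed
  have ln1: "1 \<le> ln (real n)"
  proof -
    have "exp 1 \<le> (3::real)" by (rule exp_le)
    also have "\<dots> \<le> real n" using n3 by simp
    finally have en: "exp 1 \<le> real n" .
    have "ln (exp 1) \<le> ln (real n)" by (rule ln_mono[OF en]) simp
    thus ?thesis by (simp only: ln_exp)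
  qed
  have n1: "n \<ge> 1" using n3 by simp
  have dp: "\<delta> > 0" by (rule delta_pos)
  have C1p: "C1 \<ge> 0" unfolding C1_def using a0 by simp
  have "\<bar>\<Sum>j<n. d j\<bar> \<le> (\<Sum>j<n. \<bar>d j\<bar>)" by (rule sum_abs)
  also have "\<dots> \<le> (\<Sum>j<n. (C1 / \<delta>) * (1 / real (Suc j)))"
  proof (rule sum_mono)
    fix j assume "j \<in> {..<n}"
    have "\<bar>d j\<bar> \<le> C1 / y (Suc j)" unfolding d_def by (rule D_bounds(3)[OF mm])
    also have "\<dots> \<le> C1 / (\<delta> * real (Suc j))"
    proof (rule divide_left_mono[OF _ C1p])
      show "\<delta> * real (Suc j) \<le> y (Suc j)" using y_lower[OF mm, of "Suc j"] by simp
      show "0 < y (Suc j) * (\<delta> * real (Suc j))" using y_pos dp by simp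
    qed
    also have "\<dots> = (C1 / \<delta>) * (1 / real (Suc j))" by simp
    finally show "\<bar>d j\<bar> \<le> (C1 / \<delta>) * (1 / real (Suc j))" .
  qed
  also have "\<dots> = (C1 / \<delta>) * (\<Sum>j<n. 1 / real (Suc j))" by (simp add: sum_distrib_left)
  also have "\<dots> \<le> (C1 / \<delta>) * (1 + ln n)" using harm_bound[OF n1] C1p dp by (intro mult_left_mono) auto
  also have "\<dots> \<le> (C1 / \<delta>) * (2 * ln n)" using ln1 C1p dp by (intro mult_left_mono) auto
  also have "\<dots> = 2 * (C1 / \<delta>) * ln n" by (simp only: mult.assoc mult.left_commute)
  finally have dB: "\<bar>\<Sum>j<n. d j\<bar> \<le> 2 * (C1 / \<delta>) * ln n" .
  define J where "J = {j\<in>{..<n}. mm j \<noteq> M1 c1 K (xs (Suc j))}"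
  have "\<bar>\<Sum>j<n. e j\<bar> \<le> (\<Sum>j<n. \<bar>e j\<bar>)" by (rule sum_abs)
  also have "\<dots> \<le> (\<Sum>j<n. if mm j \<noteq> M1 c1 K (xs (Suc j)) then K/2 else 0)"
  proof (rule sum_mono)
    fix j assume "j \<in> {..<n}"
    have b1: "K/2 < M1 c1 K (xs (Suc j))" by (rule M1_bounds(1)[OF K0])
    have b2: "M1 c1 K (xs (Suc j)) \<le> K" by (rule M1_bounds(2)[OF K0])
    have m1: "K/2 \<le> mm j" "mm j \<le> K" using mm[of j] by simp_all
    show "\<bar>e j\<bar> \<le> (if mm j \<noteq> M1 c1 K (xs (Suc j)) then K/2 else 0)"
    proof (cases "mm j \<noteq> M1 c1 K (xs (Suc j))")
      case True
      have "\<bar>e j\<bar> \<le> K/2" unfolding e_def abs_le_iff using b1 b2 m1 by linarith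
      thus ?thesis using True by simp
    next
      case False thus ?thesis unfolding e_def by simp
    qed
  qed
  also have "\<dots> = (\<Sum>j\<in>J. K/2)" unfolding J_def by (rule sum.inter_filter[symmetric]) simp
  also have "\<dots> = K/2 * real (card J)" by simp
  finally have eB0: "\<bar>\<Sum>j<n. e j\<bar> \<le> K/2 * real (card J)" .
  have "a * \<bar>\<Sum>j<n. e j\<bar> \<le> a * (K/2 * ((ln (2 + a * K) + ln n) / (a * c1)))"
  proof -
    have "real (card J) \<le> (ln (2 + a * K) + ln n) / (a * c1)" unfolding J_def by (rule card_jumps[OF n1])
    hence "K/2 * real (card J) \<le> K/2 * ((ln (2 + a * K) + ln n) / (a * c1))"
      by (rule mult_left_mono) (use K0 in simp)
    hence "\<bar>\<Sum>j<n. e j\<bar> \<le> K/2 * ((ln (2 + a * K) + ln n) / (a * c1))" using eB0 by linarith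
    thus ?thesis by (rule mult_left_mono) (use a0 in simp)
  qed
  also have "\<dots> = (K/2) * (ln (2 + a * K) + ln n) / c1"
  proof -
    have "\<And>X. a * (K/2 * (X / (a * c1))) = (K/2) * X / c1" using a0 by (simp add: field_simps)
    thus ?thesis by blast
  qed
  also have "\<dots> \<le> (K/2) * ((ln (2 + a * K) + 1) * ln n) / c1"
  proof -
    have L0: "0 \<le> ln (2 + a * K)" using a0 K0 by simp
    have "ln (2 + a * K) + ln n \<le> (ln (2 + a * K) + 1) * ln n"
      using mult_left_mono[OF ln1 L0] by (simp add: algebra_simps)
    hence "(K/2) * (ln (2 + a * K) + ln n) \<le> (K/2) * ((ln (2 + a * K) + 1) * ln n)"
      by (rule mult_left_mono) (use K0 in simp)
    thus ?thesis by (rule divide_right_mono) (use c0 in simp)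
  qed
  finally have eB: "\<bar>a * (\<Sum>j<n. e j)\<bar> \<le> (K/2) * (ln (2 + a * K) + 1) / c1 * ln n"
    using a0 by (simp add: abs_mult)
  have "\<bar>y 0\<bar> \<le> 2 * ln n" using y0_bounds ln1 by simp
  hence "\<bar>y n - a * (\<Sum>j<n. M1 c1 K (xs (Suc j)))\<bar> \<le> 2 * ln n + 2 * (C1 / \<delta>) * ln n + (K/2) * (ln (2 + a * K) + 1) / c1 * ln n"
    unfolding Eeq using dB eB by linarith
  thus ?thesis by (simp only: B0_def distrib_right)
qed

end
end


context P begin

context
  fixes mm :: "nat \<Rightarrow> real"
  assumes mm: "\<And>n. K/2 \<le> mm n \<and> mm n \<le> K \<and> xs n = xs (Suc n) + mm n * xs (Suc n) powr (1+a) \<and>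
   (mm n \<noteq> M1 c1 K (xs (Suc n)) \<longrightarrow> (\<exists>l\<ge>1. xs (Suc n) = s l))"
begin

lemma final_bound:
  fixes n :: nat
  assumes n3: "n \<ge> 3"
  shows "\<bar>xs n - 1 / (a * M0 a c1 K n * real n) powr (1/a)\<bar>
    \<le> ((1/a) * (min \<delta> (a*K/2)) powr (- (1/a) - 1) * B0) * (ln (real n) / real n powr (1 + 1/a))"
proof -
  define S where "S = (\<Sum>j<n. M1 c1 K (xs (Suc j)))"
  define c where "c = min \<delta> (a*K/2)"
  have np: "0 < real n" using n3 by simp
  have cp: "0 < c" unfolding c_def using delta_pos a0 K0 by simp
  have M0eq: "M0 a c1 K n = S / real n"
    unfolding M0_def S_def using sum.atLeast1_atMost_eq[of "\<lambda>j. M1 c1 K (xs j)" n] by simp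
  have Yeq: "a * M0 a c1 K n * real n = a * S" unfolding M0eq using np by simp
  have Slow: "real n * (K/2) \<le> S"
  proof -
    have "(\<Sum>j<n. K/2) \<le> S" unfolding S_def
      by (rule sum_mono) (use M1_bounds(1)[OF K0] in \<open>simp add: less_imp_le\<close>)
    thus ?thesis by simp
  qed
  have c1n: "c * real n \<le> y n"
  proof -
    have "c * real n \<le> \<delta> * real n" unfolding c_def using np by (intro mult_right_mono) auto
    also have "\<dots> \<le> y n" using y_lower[OF mm, of n] by simp
    finally show ?thesis .
  qed
  have c2n: "c * real n \<le> a * S"
  proof -
    have "c * real n \<le> (a*K/2) * real n" unfolding c_def using np by (intro mult_right_mono) auto
    also have "\<dots> = a * (real n * (K/2))" by simp
    also have "\<dots> \<le> a * S" using Slow a0 by (intro mult_left_mono) auto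
    finally show ?thesis .
  qed
  have b: "0 < 1/a" using a0 by simp
  have PB: "\<bar>y n powr (-(1/a)) - (a*S) powr (-(1/a))\<bar> \<le> (1/a) * (c * real n) powr (-(1/a) - 1) * \<bar>y n - a*S\<bar>"
    by (rule powr_diff_bound[OF b _ c1n c2n]) (use cp np in simp)
  have yx: "y n powr (-(1/a)) = xs n"
  proof -
    have "y n powr (-(1/a)) = xs n powr ((-a) * (-(1/a)))" unfolding y_def by (simp add: powr_powr)
    also have "(-a) * (-(1/a)) = 1" using a0 by simp
    finally show ?thesis using xs_pos[of n] by simp
  qed
  have Ym: "1 / (a * M0 a c1 K n * real n) powr (1/a) = (a*S) powr (-(1/a))"
    unfolding Yeq by (simp add: powr_minus_divide)
  have E: "\<bar>y n - a * S\<bar> \<le> B0 * ln n" unfolding S_def by (rule E_bound[OF mm n3])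
  have cn: "(c * real n) powr (-(1/a) - 1) = c powr (-(1/a) - 1) * (1 / real n powr (1 + 1/a))"
  proof -
    have "(c * real n) powr (-(1/a) - 1) = c powr (-(1/a) - 1) * real n powr (-(1/a) - 1)"
      using cp np by (simp add: powr_mult)
    moreover have "real n powr (-(1/a) - 1) = 1 / real n powr (1 + 1/a)"
    proof -
      have "- (1/a) - 1 = - (1 + 1/a)" by simp
      thus ?thesis using powr_minus_divide[of "real n" "1 + 1/a"] by metis
    qed
    ultimately show ?thesis by simp
  qed
  have P0: "0 \<le> (1/a) * (c * real n) powr (-(1/a) - 1)" using a0 by simp
  have "\<bar>xs n - 1 / (a * M0 a c1 K n * real n) powr (1/a)\<bar> \<le> (1/a) * (c * real n) powr (-(1/a) - 1) * \<bar>y n - a*S\<bar>"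
    using PB unfolding yx Ym .
  also have "\<dots> \<le> (1/a) * (c * real n) powr (-(1/a) - 1) * (B0 * ln n)"
    by (rule mult_left_mono[OF E P0])
  also have "\<dots> = ((1/a) * c powr (- (1/a) - 1) * B0) * (ln (real n) / real n powr (1 + 1/a))"
    unfolding cn by simp
  finally show ?thesis unfolding c_def .
qed

end
end


context P begin

context
  fixes mm :: "nat \<Rightarrow> real"
  assumes mm: "\<And>n. K/2 \<le> mm n \<and> mm n \<le> K \<and> xs n = xs (Suc n) + mm n * xs (Suc n) powr (1+a) \<and>
   (mm n \<noteq> M1 c1 K (xs (Suc n)) \<longrightarrow> (\<exists>l\<ge>1. xs (Suc n) = s l))"
begin

lemma B0_nonneg: "0 \<le> B0"
proof -
  have "0 \<le> C1 / \<delta>" unfolding C1_def using a0 delta_pos by simp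
  moreover have "0 \<le> (K/2) * (ln (2 + a * K) + 1) / c1"
  proof -
    have "0 < a * K" using a0 K0 by simp
    hence "0 \<le> ln (2 + a * K)" by simp
    thus ?thesis using K0 c0 by simp
  qed
  moreover have "B0 = 2 + 2 * (C1 / \<delta>) + (K/2) * (ln (2 + a * K) + 1) / c1" by (rule B0_def[OF mm])
  ultimately show ?thesis by linarith
qed

lemma final_O:
  "(\<lambda>n. xs n - 1 / (a * M0 a c1 K n * real n) powr (1/a)) \<in> O(\<lambda>n. ln (real n) / real n powr (1 + 1/a))"
proof -
  define Bf where "Bf = (1/a) * (min \<delta> (a*K/2)) powr (- (1/a) - 1) * B0"
  have Bf0: "0 \<le> Bf" unfolding Bf_def using a0 B0_nonneg by simp
  have "eventually (\<lambda>n. norm (xs n - 1 / (a * M0 a c1 K n * real n) powr (1/a))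
     \<le> Bf * norm (ln (real n) / real n powr (1 + 1/a))) sequentially"
    unfolding eventually_sequentially
  proof (intro exI allI impI)
    fix n :: nat assume n: "3 \<le> n"
    have "norm (xs n - 1 / (a * M0 a c1 K n * real n) powr (1/a)) \<le> Bf * (ln (real n) / real n powr (1 + 1/a))"
      using final_bound[OF mm n] unfolding Bf_def by simp
    also have "\<dots> \<le> Bf * norm (ln (real n) / real n powr (1 + 1/a))"
      by (rule mult_left_mono[OF _ Bf0]) (simp add: divide_right_mono)
    finally show "norm (xs n - 1 / (a * M0 a c1 K n * real n) powr (1/a))
     \<le> Bf * norm (ln (real n) / real n powr (1 + 1/a))" .
  qed
  thus ?thesis by (rule bigoI)
qed

end
end

theorem proposition4p1:
  fixes \<alpha> \<beta> c1 C0 :: real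
  assumes "0 < \<alpha>" and "\<alpha> < 1" and "\<beta> = 1 / \<alpha>"
    and "0 < c1"
    and "(fM1 \<alpha> c1 C0 \<longlongrightarrow> 1) (at_left (1/2))"
  shows "(\<lambda>n. xseq \<alpha> c1 C0 n - 1 / (\<alpha> * M0 \<alpha> c1 C0 n * real n) powr \<beta>)
           \<in> O(\<lambda>n. ln (real n) / real n powr (1 + \<beta>))"
proof -
  have C0p: "0 < C0"
  proof (rule ccontr)
    assume nc: "\<not> 0 < C0"
    have ev0: "eventually (\<lambda>x. x \<in> {0<..<1/2}) (at_left (1/2::real))"
      by (rule eventually_at_left_real) simp
    have ev: "eventually (\<lambda>x. fM1 \<alpha> c1 C0 x \<le> 1/2) (at_left (1/2::real))"
      using ev0
    proof (rule eventually_mono)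
      fix x :: real assume x: "x \<in> {0<..<1/2}"
      have "M1 c1 C0 x \<le> 0" unfolding M1_def using nc by (simp add: mult_nonpos_nonneg)
      hence "M1 c1 C0 x * x powr \<alpha> \<le> 0" by (simp add: mult_nonpos_nonneg)
      hence le: "x * (1 + M1 c1 C0 x * x powr \<alpha>) \<le> x * 1" using x by (intro mult_left_mono) auto
      have fx: "fM1 \<alpha> c1 C0 x = x * (1 + M1 c1 C0 x * x powr \<alpha>)" unfolding fM1_def using x by simp
      have "x * (M1 c1 C0 x * x powr \<alpha>) \<le> 0" 
        by (rule mult_nonneg_nonpos[OF _ \<open>M1 c1 C0 x * x powr \<alpha> \<le> 0\<close>]) (use x in simp)
      moreover have "fM1 \<alpha> c1 C0 x = x + x * (M1 c1 C0 x * x powr \<alpha>)" using fx by (simp add: algebra_simps)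
      ultimately show "fM1 \<alpha> c1 C0 x \<le> 1/2" using x by simp
    qed
    have "1 \<le> (1/2::real)" by (rule tendsto_upperbound[OF assms(5) ev]) simp
    thus False by simp
  qed
  interpret P \<alpha> c1 C0 using assms C0p by unfold_locales auto
  obtain mm where mm: "\<forall>n. C0/2 \<le> mm n \<and> mm n \<le> C0 \<and> xs n = xs (Suc n) + mm n * xs (Suc n) powr (1+\<alpha>) \<and>
   (mm n \<noteq> M1 c1 C0 (xs (Suc n)) \<longrightarrow> (\<exists>l\<ge>1. xs (Suc n) = s l))" using ex_mm by blast
  have "(\<lambda>n. xs n - 1 / (\<alpha> * M0 \<alpha> c1 C0 n * real n) powr (1/\<alpha>)) \<in> O(\<lambda>n. ln (real n) / real n powr (1 + 1/\<alpha>))"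
    by (rule final_O) (use mm in blast)
  thus ?thesis unfolding assms(3) .
qed


end
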